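(* Fix $\delta\in(0,1)$, $T\ge1$, a measurable $f:\mathbb R^{d_x}\to\mathbb R^{d_x}$, a matrix $H\in\mathbb R^{d_x\times d_x}$, and $R\ge\sqrt{d_x}+\sqrt{2\log(T/\delta)}$. Let $\{W_t\}_{t\ge0}$, $\{W'_t\}_{t\ge0}$ be i.i.d. $N(0,I_{d_x})$ sequences, $\bar W_t=W'_t\mathbf 1\{\|W'_t\|_2\le R\}$, and define $$X_{t+1}=f(X_t)+HW_t,\ X_0=HW_0;\qquad \bar X_{t+1}=f(\bar X_t)+H\bar W_t,\ \bar X_0=H\bar W_0.$$ Then for any $k\in\{1,\dots,T-1\}$, $t\in\{0,\dots,T-1-k\}$ and $x\in\mathbb R^{d_x}$, $$\|\mathsf P_{X_{t+k}}(\cdot\mid X_t=x)-\mathsf P_{\bar X_{t+k}}(\cdot\mid\bar X_t=x)\|_{\mathsf{TV}}\le\delta,$$ and for any $t\in\{0,\dots,T-1\}$, $\|\mathsf P_{X_t}-\mathsf P_{\bar X_t}\|_{\mathsf{TV}}\le\delta$.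
   Context: $\mathsf P_Z$ denotes the law of $Z$ and $\mathsf P_Z(\cdot\mid\cdot)$ conditional laws. $\|\mu-\nu\|_{\mathsf{TV}}=\sup_A|\mu(A)-\nu(A)|$. *)

theory Defs
  imports "HOL-Probability.Probability"
begin

definition std_gauss :: "(real ^ 'n::finite) measure" where
  "std_gauss = density lborel
     (\<lambda>x::real^'n. ennreal ((2 * pi) powr (- real CARD('n) / 2) * exp (- (norm x)\<^sup>2 / 2)))"

definition tv_dist :: "'a measure \<Rightarrow> 'a measure \<Rightarrow> real" where
  "tv_dist P Q = (SUP A \<in> sets P. \<bar>measure P A - measure Q A\<bar>)"

fun proc :: "(real^'n \<Rightarrow> real^'n) \<Rightarrow> real^'n^'n \<Rightarrow> (nat \<Rightarrow> real^'n) \<Rightarrow> nat \<Rightarrow> real^'n::finite" where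
  "proc f H w 0 = H *v w 0"
| "proc f H w (Suc t) = f (proc f H w t) + H *v w t"

fun run_from :: "(real^'n \<Rightarrow> real^'n) \<Rightarrow> real^'n^'n \<Rightarrow> (nat \<Rightarrow> real^'n) \<Rightarrow> real^'n \<Rightarrow> nat \<Rightarrow> nat \<Rightarrow> real^'n::finite" where
  "run_from f H w x s 0 = x"
| "run_from f H w x s (Suc j) = f (run_from f H w x s j) + H *v w (s + j)"

text \<open>Conditional law of the (t+k)-th state given the t-th state equals x, taken as the
  Markov transition kernel of the recursion (the version for which "for every x" is meaningful).\<close>
definition cond_law :: "'a measure \<Rightarrow> (real^'n \<Rightarrow> real^'n) \<Rightarrow> real^'n^'n \<Rightarrow> (nat \<Rightarrow> 'a \<Rightarrow> real^'n)
    \<Rightarrow> nat \<Rightarrow> nat \<Rightarrow> real^'n \<Rightarrow> (real^'n::finite) measure" where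
  "cond_law M f H W t k x = distr M borel (\<lambda>\<omega>. run_from f H (\<lambda>j. W j \<omega>) x t k)"

definition law :: "'a measure \<Rightarrow> (real^'n \<Rightarrow> real^'n) \<Rightarrow> real^'n^'n \<Rightarrow> (nat \<Rightarrow> 'a \<Rightarrow> real^'n)
    \<Rightarrow> nat \<Rightarrow> (real^'n::finite) measure" where
  "law M f H W t = distr M borel (\<lambda>\<omega>. proc f H (\<lambda>j. W j \<omega>) t)"

end

theory Submission
  imports Defs
begin

lemma gauss1:
  assumes s: "0 < s"
  shows "(\<integral>\<^sup>+y. ennreal (exp (-(s*y\<^sup>2)/2)) \<partial>lborel) = ennreal (sqrt (2*pi/s))"
proof -
  define \<sigma> where "\<sigma> = 1 / sqrt s"
  have sp: "\<sigma> > 0" using s by (simp add: \<sigma>_def)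
  have ss: "\<sigma>\<^sup>2 = 1/s" using s by (simp add: \<sigma>_def power_divide)
  have eq: "exp (-(s*y\<^sup>2)/2) = sqrt (2*pi/s) * normal_density 0 \<sigma> y" for y
    using s by (simp add: normal_density_def ss field_simps real_sqrt_divide)
  have "(\<integral>\<^sup>+y. ennreal (exp (-(s*y\<^sup>2)/2)) \<partial>lborel)
      = (\<integral>\<^sup>+y. ennreal (sqrt (2*pi/s)) * ennreal (normal_density 0 \<sigma> y) \<partial>lborel)"
  proof (intro nn_integral_cong)
    fix y
    show "ennreal (exp (-(s*y\<^sup>2)/2)) = ennreal (sqrt (2*pi/s)) * ennreal (normal_density 0 \<sigma> y)"
      unfolding eq by (rule ennreal_mult) (use s in auto)
  qed
  also have "\<dots> = ennreal (sqrt (2*pi/s)) * (\<integral>\<^sup>+y. ennreal (normal_density 0 \<sigma> y) \<partial>lborel)"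
    by (rule nn_integral_cmult) simp
  also have "(\<integral>\<^sup>+y. ennreal (normal_density 0 \<sigma> y) \<partial>lborel) = 1"
    using sp by (subst nn_integral_eq_integral) auto
  finally show ?thesis by simp
qed

lemma gaussn:
  assumes s: "0 < s"
  shows "(\<integral>\<^sup>+x. ennreal (exp (-(s*(norm (x::'a::euclidean_space))\<^sup>2)/2)) \<partial>lborel)
     = ennreal (sqrt (2*pi/s)) ^ DIM('a)"
proof -
  have "(\<integral>\<^sup>+x. ennreal (exp (-(s*(norm (x::'a))\<^sup>2)/2)) \<partial>lborel)
     = (\<integral>\<^sup>+x. (\<Prod>b\<in>Basis. ennreal (exp (-(s*((x::'a)\<bullet>b)\<^sup>2)/2))) \<partial>lborel)"
  proof (intro nn_integral_cong)
    fix x :: 'a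
    have "(norm x)\<^sup>2 = (\<Sum>b\<in>Basis. (x\<bullet>b)\<^sup>2)"
      unfolding power2_norm_eq_inner using euclidean_inner[of x x] by (simp only: power2_eq_square)
    then have "-(s*(norm x)\<^sup>2)/2 = (\<Sum>b\<in>Basis. -(s*(x\<bullet>b)\<^sup>2)/2)"
      by (simp add: sum_divide_distrib[symmetric] sum_distrib_left sum_negf)
    then have "exp (-(s*(norm x)\<^sup>2)/2) = (\<Prod>b\<in>Basis. exp (-(s*(x\<bullet>b)\<^sup>2)/2))"
      by (simp add: exp_sum[symmetric])
    then show "ennreal (exp (-(s*(norm x)\<^sup>2)/2)) = (\<Prod>b\<in>Basis. ennreal (exp (-(s*(x\<bullet>b)\<^sup>2)/2)))"
      by (simp add: prod_ennreal)
  qed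
  also have "\<dots> = (\<Prod>b\<in>(Basis::'a set). (\<integral>\<^sup>+y. ennreal (exp (-(s*y\<^sup>2)/2)) \<partial>lborel))"
    by (rule nn_integral_lborel_prod) auto
  also have "\<dots> = ennreal (sqrt (2*pi/s)) ^ DIM('a)"
    using gauss1[OF s] by simp
  finally show ?thesis .
qed

lemma chernoff_real:
  fixes d :: nat and L R :: real
  assumes d: "1 \<le> d" and L: "0 < L" and R: "sqrt (real d) + sqrt (2*L) \<le> R"
  defines "a \<equiv> sqrt (real d)" and "b \<equiv> sqrt (2*L)"
  defines "r \<equiv> a + b"
  shows "(2*pi) powr (- real d / 2) * exp (- (b/(2*r)) * R\<^sup>2) * sqrt (2*pi/(a/r)) ^ d \<le> exp (-L)"
proof -
  have a1: "a \<ge> 1" using d by (simp add: a_def)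
  have b0: "b > 0" using L by (simp add: b_def)
  have r0: "r > 0" "r \<ge> a" using a1 b0 by (auto simp: r_def)
  have bb: "b\<^sup>2 = 2*L" using L by (simp add: b_def)
  have aa: "a\<^sup>2 = real d" by (simp add: a_def)
  define s where "s = a/r"
  have s0: "s > 0" using a1 r0 by (simp add: s_def)
  have "sqrt (2*pi/s) ^ d = (2*pi/s) powr (real d / 2)"
  proof -
    have "sqrt (2*pi/s) ^ d = sqrt (2*pi/s) powr real d"
      using s0 by (simp add: powr_realpow)
    also have "\<dots> = ((2*pi/s) powr (1/2)) powr real d"
      using s0 by (simp add: powr_half_sqrt)
    also have "\<dots> = (2*pi/s) powr (real d / 2)"
      by (simp add: powr_powr)
    finally show ?thesis .
  qed
  then have "(2*pi) powr (- real d / 2) * sqrt (2*pi/s) ^ d = s powr (- real d / 2)"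
    using s0 by (simp add: powr_divide powr_minus divide_simps)
  also have "\<dots> = exp (- (real d / 2) * ln s)"
    using s0 by (simp add: powr_def)
  finally have e1: "(2*pi) powr (- real d / 2) * sqrt (2*pi/s) ^ d = exp (- (real d / 2) * ln s)" .
  have lnr: "- ln s = ln (1 + b/a)"
    using a1 r0 b0 by (simp add: s_def ln_div r_def field_simps)
  also have "\<dots> \<le> b/a" using a1 b0 by (intro ln_add_one_self_le_self) simp
  finally have "(real d / 2) * (- ln s) \<le> (real d / 2) * (b/a)"
    by (intro mult_left_mono) auto
  then have "- (real d / 2) * ln s \<le> (real d / 2) * (b/a)" by simp
  also have "(real d / 2) * (b/a) = a*b/2" using a1 aa[symmetric] by (simp add: power2_eq_square field_simps)
  finally have i1: "- (real d / 2) * ln s \<le> a*b/2" .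
  have "r\<^sup>2 \<le> R\<^sup>2" using R r0 by (simp add: r_def a_def b_def power_mono)
  then have "(b/(2*r)) * r\<^sup>2 \<le> (b/(2*r)) * R\<^sup>2" using b0 r0 by (intro mult_left_mono) auto
  moreover have "(b/(2*r)) * r\<^sup>2 = b*(a+b)/2" using r0 unfolding r_def by (simp add: power2_eq_square field_simps)
  ultimately have i2: "- (b/(2*r)) * R\<^sup>2 \<le> - (b*(a+b)/2)" by simp
  have "(2*pi) powr (- real d / 2) * exp (- (b/(2*r)) * R\<^sup>2) * sqrt (2*pi/(a/r)) ^ d
      = exp (- (b/(2*r)) * R\<^sup>2 + - (real d / 2) * ln s)"
  proof -
    have "(2*pi) powr (- real d / 2) * exp (- (b/(2*r)) * R\<^sup>2) * sqrt (2*pi/(a/r)) ^ d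
       = exp (- (b/(2*r)) * R\<^sup>2) * ((2*pi) powr (- real d / 2) * sqrt (2*pi/s) ^ d)"
      by (simp add: s_def mult_ac)
    also have "\<dots> = exp (- (b/(2*r)) * R\<^sup>2) * exp (- (real d / 2) * ln s)" by (simp only: e1)
    finally show ?thesis by (simp only: exp_add)
  qed
  also have "\<dots> \<le> exp (-L)"
    using i1 i2 bb by (simp add: power2_eq_square algebra_simps)
  finally show ?thesis .
qed

lemma gauss_tail:
  fixes L R :: real
  assumes L: "0 < L" and R: "sqrt (real CARD('n)) + sqrt (2*L) \<le> R"
  shows "emeasure (std_gauss :: (real^'n::finite) measure) {x. R < norm x} \<le> ennreal (exp (-L))"
proof -
  define d where "d = CARD('n)"
  define a where "a = sqrt (real d)"
  define b where "b = sqrt (2*L)"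
  define r where "r = a + b"
  define lam where "lam = b/(2*r)"
  define s where "s = a/r"
  define c where "c = (2*pi) powr (- real d / 2)"
  have d1: "1 \<le> d" by (simp add: d_def Suc_le_eq)
  have a1: "a \<ge> 1" using d1 by (simp add: a_def)
  have b0: "b > 0" using L by (simp add: b_def)
  have r0: "r > 0" using a1 b0 by (auto simp: r_def)
  have s0: "s > 0" using a1 r0 by (simp add: s_def)
  have lam0: "lam > 0" using b0 r0 by (simp add: lam_def)
  have slam: "s = 1 - 2*lam" using r0 by (simp add: s_def lam_def r_def field_simps)
  have Rr: "r \<le> R" using R by (simp add: r_def a_def b_def d_def)
  have c0: "c \<ge> 0" by (simp add: c_def)
  let ?A = "{x::real^'n. R < norm x}"
  have A[measurable]: "?A \<in> sets borel" by measurable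
  have "emeasure (std_gauss :: (real^'n) measure) ?A
      = (\<integral>\<^sup>+x. ennreal (c * exp (- (norm x)\<^sup>2 / 2)) * indicator ?A x \<partial>lborel)"
    unfolding std_gauss_def c_def d_def by (subst emeasure_density) auto
  also have "\<dots> \<le> (\<integral>\<^sup>+x. ennreal (c * exp (- lam * R\<^sup>2)) * ennreal (exp (-(s*(norm (x::real^'n))\<^sup>2)/2)) \<partial>lborel)"
  proof (intro nn_integral_mono)
    fix x :: "real^'n"
    show "ennreal (c * exp (- (norm x)\<^sup>2 / 2)) * indicator ?A x
        \<le> ennreal (c * exp (- lam * R\<^sup>2)) * ennreal (exp (-(s*(norm x)\<^sup>2)/2))"
    proof (cases "x \<in> ?A")
      case True
      then have "R\<^sup>2 \<le> (norm x)\<^sup>2" using Rr r0 by (intro power_mono) auto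
      then have "- lam * (norm x)\<^sup>2 \<le> - lam * R\<^sup>2" using lam0 by simp
      then have "- (norm x)\<^sup>2 / 2 \<le> - lam * R\<^sup>2 + (-(s*(norm x)\<^sup>2)/2)"
        by (simp add: slam algebra_simps)
      then have "exp (- (norm x)\<^sup>2 / 2) \<le> exp (- lam * R\<^sup>2) * exp (-(s*(norm x)\<^sup>2)/2)"
        by (simp add: exp_add[symmetric])
      then have "c * exp (- (norm x)\<^sup>2 / 2) \<le> c * exp (- lam * R\<^sup>2) * exp (-(s*(norm x)\<^sup>2)/2)"
        using c0 by (simp add: mult.assoc mult_left_mono)
      then show ?thesis using True c0
        by (simp add: ennreal_mult[symmetric] ennreal_leI)
    qed simp
  qed
  also have "\<dots> = ennreal (c * exp (- lam * R\<^sup>2)) * (\<integral>\<^sup>+x. ennreal (exp (-(s*(norm (x::real^'n))\<^sup>2)/2)) \<partial>lborel)"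
    by (rule nn_integral_cmult) measurable
  also have "\<dots> = ennreal (c * exp (- lam * R\<^sup>2)) * ennreal (sqrt (2*pi/s)) ^ d"
    using gaussn[OF s0, where 'a="real^'n"] by (simp add: d_def)
  also have "\<dots> = ennreal (c * exp (- lam * R\<^sup>2) * sqrt (2*pi/s) ^ d)"
    using c0 s0 by (simp add: ennreal_power ennreal_mult)
  also have "\<dots> \<le> ennreal (exp (-L))"
    apply (rule ennreal_leI)
    using chernoff_real[OF d1 L, of R] R
    unfolding c_def lam_def s_def r_def a_def b_def d_def by simp
  finally show ?thesis .
qed

lemma joint_law:
  fixes V :: "'i \<Rightarrow> 'a \<Rightarrow> real^'n::finite" and e :: "nat \<Rightarrow> 'i"
  assumes M: "prob_space M" and ind: "prob_space.indep_vars M (\<lambda>_. borel) V UNIV"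
    and Vm: "\<And>i. V i \<in> borel_measurable M" and Vd: "\<And>i. distr M borel (V i) = std_gauss"
    and e: "inj e" and J: "J \<noteq> {}"
  shows "distr M (PiM J (\<lambda>_. borel)) (\<lambda>\<omega>. \<lambda>j\<in>J. V (e j) \<omega>) = PiM J (\<lambda>_. std_gauss)"
proof -
  interpret prob_space M by (rule M)
  have ps: "prob_space (std_gauss :: (real^'n) measure)"
    using Vd[of undefined] prob_space_distr[OF Vm[of undefined]] by simp
  have sg: "sets (std_gauss :: (real^'n) measure) = sets borel"
    by (simp add: std_gauss_def)
  let ?K = "e ` J"
  have indK: "indep_vars (\<lambda>_. borel) V ?K"
    using ind by (rule indep_vars_subset) simp
  have K: "?K \<noteq> {}" using J by simp
  have d1: "distr M (PiM ?K (\<lambda>_. borel)) (\<lambda>\<omega>. \<lambda>i\<in>?K. V i \<omega>) = PiM ?K (\<lambda>i. distr M borel (V i))"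
    using indep_vars_iff_distr_eq_PiM[OF K, where M'="\<lambda>_. borel" and X=V] indK Vm by simp
  also have "\<dots> = PiM ?K (\<lambda>_. std_gauss)"
    by (rule PiM_cong) (auto simp: Vd)
  finally have d1': "distr M (PiM ?K (\<lambda>_. borel)) (\<lambda>\<omega>. \<lambda>i\<in>?K. V i \<omega>) = PiM ?K (\<lambda>_. std_gauss)" .
  have rm: "(\<lambda>u. \<lambda>n\<in>J. u (e n)) \<in> measurable (PiM ?K (\<lambda>_. borel)) (PiM J (\<lambda>_. borel))"
    by (rule measurable_restrict) (auto intro: measurable_component_singleton)
  have vm: "(\<lambda>\<omega>. \<lambda>i\<in>?K. V i \<omega>) \<in> measurable M (PiM ?K (\<lambda>_. borel))"
    by (rule measurable_restrict) (simp add: Vm)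
  have eqf: "(\<lambda>\<omega>. \<lambda>j\<in>J. V (e j) \<omega>) = (\<lambda>u. \<lambda>n\<in>J. u (e n)) \<circ> (\<lambda>\<omega>. \<lambda>i\<in>?K. V i \<omega>)"
    by (auto simp: fun_eq_iff)
  have "distr M (PiM J (\<lambda>_. borel)) (\<lambda>\<omega>. \<lambda>j\<in>J. V (e j) \<omega>)
     = distr (distr M (PiM ?K (\<lambda>_. borel)) (\<lambda>\<omega>. \<lambda>i\<in>?K. V i \<omega>)) (PiM J (\<lambda>_. borel)) (\<lambda>u. \<lambda>n\<in>J. u (e n))"
    unfolding eqf by (rule distr_distr[OF rm vm, symmetric])
  also have "\<dots> = distr (PiM ?K (\<lambda>_. std_gauss)) (PiM J (\<lambda>_. borel)) (\<lambda>u. \<lambda>n\<in>J. u (e n))"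
    by (simp only: d1')
  also have "\<dots> = distr (PiM ?K (\<lambda>_. std_gauss)) (PiM J (\<lambda>_. std_gauss)) (\<lambda>u. \<lambda>n\<in>J. u (e n))"
    by (rule distr_cong) (auto intro!: sets_PiM_cong simp: sg)
  also have "\<dots> = PiM J (\<lambda>_. std_gauss)"
    using distr_PiM_reindex[of ?K "\<lambda>_. std_gauss" e J] ps e by (auto simp: inj_on_def inj_def)
  finally show ?thesis .
qed

lemma law_dep:
  fixes Z :: "nat \<Rightarrow> 'a \<Rightarrow> 'b::topological_space" and G :: "(nat \<Rightarrow> 'b) \<Rightarrow> 'c::topological_space"
  assumes joint: "distr M (PiM J (\<lambda>_. borel)) (\<lambda>\<omega>. \<lambda>j\<in>J. Z j \<omega>) = Q"
  and Zm: "\<And>j. Z j \<in> borel_measurable M"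
  and Gm: "G \<in> measurable (PiM J (\<lambda>_. borel)) borel"
  and dep: "\<And>w w'. (\<forall>j\<in>J. w j = w' j) \<Longrightarrow> G w = G w'"
  shows "distr M borel (\<lambda>\<omega>. G (\<lambda>j. Z j \<omega>)) = distr Q borel G"
proof -
  have vm: "(\<lambda>\<omega>. \<lambda>j\<in>J. Z j \<omega>) \<in> measurable M (PiM J (\<lambda>_. borel))"
    by (rule measurable_restrict) (simp add: Zm)
  have "(\<lambda>\<omega>. G (\<lambda>j. Z j \<omega>)) = G \<circ> (\<lambda>\<omega>. \<lambda>j\<in>J. Z j \<omega>)"
    by (auto simp: fun_eq_iff intro!: dep)
  then have "distr M borel (\<lambda>\<omega>. G (\<lambda>j. Z j \<omega>)) = distr M borel (G \<circ> (\<lambda>\<omega>. \<lambda>j\<in>J. Z j \<omega>))" by simp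
  also have "\<dots> = distr (distr M (PiM J (\<lambda>_. borel)) (\<lambda>\<omega>. \<lambda>j\<in>J. Z j \<omega>)) borel G"
    by (rule distr_distr[OF Gm vm, symmetric])
  finally show ?thesis by (simp add: joint)
qed

lemma tv_le:
  fixes X Y :: "'a \<Rightarrow> 'b::topological_space"
  assumes M: "prob_space M" and Xm: "X \<in> borel_measurable M" and Ym: "Y \<in> borel_measurable M"
    and B: "B \<in> sets M" and XY: "\<And>\<omega>. \<omega> \<in> space M \<Longrightarrow> \<omega> \<notin> B \<Longrightarrow> X \<omega> = Y \<omega>"
    and mB: "measure M B \<le> d"
  shows "tv_dist (distr M borel X) (distr M borel Y) \<le> d"
  unfolding tv_dist_def
proof (rule cSUP_least)
  interpret prob_space M by (rule M)
  show "sets (distr M borel X) \<noteq> {}" by auto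
  fix A assume "A \<in> sets (distr M borel X)"
  then have A: "A \<in> sets borel" by simp
  have mx: "measure (distr M borel X) A = measure M (X -` A \<inter> space M)"
    using Xm A by (rule measure_distr)
  have my: "measure (distr M borel Y) A = measure M (Y -` A \<inter> space M)"
    using Ym A by (rule measure_distr)
  have sx: "X -` A \<inter> space M \<in> sets M" using Xm A by measurable
  have sy: "Y -` A \<inter> space M \<in> sets M" using Ym A by measurable
  have "measure M (X -` A \<inter> space M) \<le> measure M ((Y -` A \<inter> space M) \<union> B)"
    using XY sx sy B by (intro finite_measure_mono) auto
  also have "\<dots> \<le> measure M (Y -` A \<inter> space M) + measure M B"
    using sy B by (rule measure_Un_le)
  finally have 1: "measure M (X -` A \<inter> space M) \<le> measure M (Y -` A \<inter> space M) + measure M B" .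
  have "measure M (Y -` A \<inter> space M) \<le> measure M ((X -` A \<inter> space M) \<union> B)"
    using XY sx sy B by (intro finite_measure_mono) auto
  also have "\<dots> \<le> measure M (X -` A \<inter> space M) + measure M B"
    using sx B by (rule measure_Un_le)
  finally have 2: "measure M (Y -` A \<inter> space M) \<le> measure M (X -` A \<inter> space M) + measure M B" .
  show "\<bar>measure (distr M borel X) A - measure (distr M borel Y) A\<bar> \<le> d"
    using 1 2 mB unfolding mx my by linarith
qed

lemma mulv_meas[measurable]: "(\<lambda>v. (H::real^'n::finite^'n) *v v) \<in> borel_measurable borel"
  by (intro borel_measurable_continuous_onI linear_continuous_on matrix_vector_mul_bounded_linear)

lemma run_from_dep:
  "(\<forall>j<k. w (s+j) = w' (s+j)) \<Longrightarrow> run_from f H w x s k = run_from f H w' x s k"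
  by (induction k) auto

lemma proc_dep:
  "(\<forall>j\<le>t. w j = w' j) \<Longrightarrow> proc f H w t = proc f H w' t"
  by (induction t) auto

lemma run_from_meas:
  fixes Z :: "'a \<Rightarrow> nat \<Rightarrow> real^'n::finite"
  assumes f[measurable]: "f \<in> borel_measurable borel"
    and Z: "\<And>j. j \<in> {s..<s+k} \<Longrightarrow> (\<lambda>\<omega>. Z \<omega> j) \<in> borel_measurable N"
  shows "(\<lambda>\<omega>. run_from f H (Z \<omega>) x s k) \<in> borel_measurable N"
  using Z
proof (induction k)
  case 0 then show ?case by simp
next
  case (Suc k)
  have [measurable]: "(\<lambda>\<omega>. run_from f H (Z \<omega>) x s k) \<in> borel_measurable N"
    using Suc by auto
  have [measurable]: "(\<lambda>\<omega>. Z \<omega> (s+k)) \<in> borel_measurable N"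
    using Suc by auto
  show ?case by simp
qed

lemma proc_meas:
  fixes Z :: "'a \<Rightarrow> nat \<Rightarrow> real^'n::finite"
  assumes f[measurable]: "f \<in> borel_measurable borel"
    and Z: "\<And>j. j \<in> {..t} \<Longrightarrow> (\<lambda>\<omega>. Z \<omega> j) \<in> borel_measurable N"
  shows "(\<lambda>\<omega>. proc f H (Z \<omega>) t) \<in> borel_measurable N"
  using Z
proof (induction t)
  case 0
  have [measurable]: "(\<lambda>\<omega>. Z \<omega> 0) \<in> borel_measurable N" using 0 by auto
  show ?case by simp
next
  case (Suc t)
  have [measurable]: "(\<lambda>\<omega>. proc f H (Z \<omega>) t) \<in> borel_measurable N"
    using Suc by auto
  have [measurable]: "(\<lambda>\<omega>. Z \<omega> t) \<in> borel_measurable N"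
    using Suc by auto
  show ?case by simp
qed

theorem proposition11:
  fixes M :: "'a measure"
    and W W' :: "nat \<Rightarrow> 'a \<Rightarrow> real ^ 'n::finite"
    and f :: "real ^ 'n \<Rightarrow> real ^ 'n"
    and H :: "real ^ 'n ^ 'n"
    and \<delta> R :: real and T :: nat
  assumes "prob_space M"
    and "0 < \<delta>" "\<delta> < 1" "1 \<le> T"
    and "f \<in> borel_measurable borel"
    and "R \<ge> sqrt (real CARD('n)) + sqrt (2 * ln (real T / \<delta>))"
    and "\<And>n. W n \<in> borel_measurable M" "\<And>n. W' n \<in> borel_measurable M"
    and "prob_space.indep_vars M (\<lambda>_. borel)
           (\<lambda>i. case i of Inl n \<Rightarrow> W n | Inr n \<Rightarrow> W' n) (UNIV :: (nat + nat) set)"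
    and "\<And>n. distr M borel (W n) = std_gauss" "\<And>n. distr M borel (W' n) = std_gauss"
  defines "Wbar \<equiv> (\<lambda>n \<omega>. if norm (W' n \<omega>) \<le> R then W' n \<omega> else 0)"
  shows "(\<forall>k t x. 1 \<le> k \<and> t + k \<le> T - 1 \<longrightarrow>
            tv_dist (cond_law M f H W t k x) (cond_law M f H Wbar t k x) \<le> \<delta>)
       \<and> (\<forall>t. t \<le> T - 1 \<longrightarrow> tv_dist (law M f H W t) (law M f H Wbar t) \<le> \<delta>)"
proof -
  note M = assms(1) and d0 = assms(2) and d1 = assms(3) and T1 = assms(4) and fm = assms(5)
    and Rge = assms(6) and Wm = assms(7) and W'm = assms(8) and ind = assms(9)
    and Wd = assms(10) and W'd = assms(11)
  interpret prob_space M by (rule M)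
  define V where "V = (\<lambda>i. case i of Inl n \<Rightarrow> W n | Inr n \<Rightarrow> W' n)"
  have Vm: "\<And>i. V i \<in> borel_measurable M"
    by (simp add: V_def Wm W'm split: sum.split)
  have Vd: "\<And>i. distr M borel (V i) = std_gauss"
    by (simp add: V_def Wd W'd split: sum.split)
  have indV: "indep_vars (\<lambda>_. borel) V UNIV" using ind by (simp add: V_def)
  have Wbm[measurable]: "\<And>n. Wbar n \<in> borel_measurable M"
    unfolding Wbar_def using W'm by measurable
  have [measurable]: "\<And>n. W' n \<in> borel_measurable M" by (rule W'm)
  define L where "L = ln (real T / \<delta>)"
  have TD: "real T / \<delta> > 1" using d0 d1 T1
    by (simp add: field_simps)
  have L0: "L > 0" using TD by (simp add: L_def)
  have eL: "exp (-L) = \<delta> / real T" using TD d0 by (simp add: L_def exp_minus)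
  have tail: "measure M {\<omega>\<in>space M. R < norm (W' j \<omega>)} \<le> \<delta> / real T" for j
  proof -
    have A: "{x::real^'n. R < norm x} \<in> sets borel" by measurable
    have "measure M {\<omega>\<in>space M. R < norm (W' j \<omega>)} = measure (distr M borel (W' j)) {x. R < norm x}"
      by (subst measure_distr[OF W'm A]) (auto intro!: arg_cong[where f="measure M"])
    also have "\<dots> = measure std_gauss {x::real^'n. R < norm x}" by (simp add: W'd)
    also have "\<dots> \<le> exp (-L)"
      unfolding measure_def
      by (rule enn2real_leI) (use gauss_tail[OF L0, of R] Rge in \<open>auto simp: L_def\<close>)
    finally show ?thesis by (simp add: eL)
  qed
  have key: "tv_dist (distr M borel (\<lambda>\<omega>. G (\<lambda>j. W j \<omega>))) (distr M borel (\<lambda>\<omega>. G (\<lambda>j. Wbar j \<omega>))) \<le> \<delta>"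
    if J: "finite J" "J \<noteq> {}" "card J \<le> T"
      and Gm: "G \<in> measurable (PiM J (\<lambda>_. borel)) borel"
      and dep: "\<And>w w'. (\<forall>j\<in>J. w j = w' j) \<Longrightarrow> G w = G w'"
      and GZ: "\<And>Z. (\<And>j. Z j \<in> borel_measurable M) \<Longrightarrow> (\<lambda>\<omega>. G (\<lambda>j. Z j \<omega>)) \<in> borel_measurable M"
    for G :: "(nat \<Rightarrow> real^'n) \<Rightarrow> real^'n" and J
  proof -
    have jW: "distr M (PiM J (\<lambda>_. borel)) (\<lambda>\<omega>. \<lambda>j\<in>J. W j \<omega>) = PiM J (\<lambda>_. std_gauss)"
      using joint_law[OF M indV Vm Vd, of Inl J] J by (simp add: V_def)
    have jW': "distr M (PiM J (\<lambda>_. borel)) (\<lambda>\<omega>. \<lambda>j\<in>J. W' j \<omega>) = PiM J (\<lambda>_. std_gauss)"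
      using joint_law[OF M indV Vm Vd, of Inr J] J by (simp add: V_def)
    have e: "distr M borel (\<lambda>\<omega>. G (\<lambda>j. W j \<omega>)) = distr M borel (\<lambda>\<omega>. G (\<lambda>j. W' j \<omega>))"
      using law_dep[OF jW Wm Gm dep] law_dep[OF jW' W'm Gm dep] by simp
    define B where "B = (\<Union>j\<in>J. {\<omega>\<in>space M. R < norm (W' j \<omega>)})"
    have Bs: "B \<in> sets M" unfolding B_def using J by measurable
    have "measure M B \<le> (\<Sum>j\<in>J. measure M {\<omega>\<in>space M. R < norm (W' j \<omega>)})"
      unfolding B_def using J by (intro measure_UNION_le) auto
    also have "\<dots> \<le> (\<Sum>j\<in>J. \<delta> / real T)" by (intro sum_mono tail)
    also have "\<dots> = real (card J) * (\<delta> / real T)" by simp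
    also have "\<dots> \<le> real T * (\<delta> / real T)"
      using J d0 by (intro mult_right_mono) auto
    also have "\<dots> = \<delta>" using T1 by simp
    finally have mB: "measure M B \<le> \<delta>" .
    have "tv_dist (distr M borel (\<lambda>\<omega>. G (\<lambda>j. W' j \<omega>))) (distr M borel (\<lambda>\<omega>. G (\<lambda>j. Wbar j \<omega>))) \<le> \<delta>"
    proof (rule tv_le[OF M GZ GZ Bs _ mB])
      fix \<omega> assume "\<omega> \<in> space M" "\<omega> \<notin> B"
      then have "\<forall>j\<in>J. W' j \<omega> = Wbar j \<omega>" by (auto simp: B_def Wbar_def)
      then show "G (\<lambda>j. W' j \<omega>) = G (\<lambda>j. Wbar j \<omega>)" by (rule dep)
    qed (auto simp: W'm Wbm)
    then show ?thesis by (simp add: e)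
  qed
  have comp: "(\<lambda>\<omega>. \<omega> j) \<in> borel_measurable (PiM J (\<lambda>_. borel))" if "j \<in> J" for j and J :: "nat set"
    using that by (rule measurable_component_singleton)
  show ?thesis
  proof (intro conjI allI impI)
    fix k t x assume kt: "1 \<le> k \<and> t + k \<le> T - 1"
    show "tv_dist (cond_law M f H W t k x) (cond_law M f H Wbar t k x) \<le> \<delta>"
      unfolding cond_law_def
    proof (rule key[of "{t..<t+k}"])
      show "finite {t..<t+k}" by simp
      show "{t..<t+k} \<noteq> {}" using kt by simp
      show "card {t..<t+k} \<le> T" using kt by (simp; linarith)
      show "(\<lambda>u. run_from f H u x t k) \<in> borel_measurable (PiM {t..<t+k} (\<lambda>_. borel))"
        by (rule run_from_meas[OF fm comp])
      show "run_from f H w x t k = run_from f H w' x t k" if "\<forall>j\<in>{t..<t+k}. w j = w' j" for w w'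
        using that by (intro run_from_dep) auto
      show "(\<lambda>\<omega>. run_from f H (\<lambda>j. Z j \<omega>) x t k) \<in> borel_measurable M"
        if "\<And>j. Z j \<in> borel_measurable M" for Z
        using that by (intro run_from_meas[OF fm]) auto
    qed
  next
    fix t assume t: "t \<le> T - 1"
    show "tv_dist (law M f H W t) (law M f H Wbar t) \<le> \<delta>"
      unfolding law_def
    proof (rule key[of "{..t}"])
      show "finite {..t}" by simp
      show "{..t} \<noteq> {}" by auto
      show "card {..t} \<le> T" using t T1 by simp
      show "(\<lambda>u. proc f H u t) \<in> borel_measurable (PiM {..t} (\<lambda>_. borel))"
        by (rule proc_meas[OF fm comp])
      show "proc f H w t = proc f H w' t" if "\<forall>j\<in>{..t}. w j = w' j" for w w'
        using that by (intro proc_dep) auto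
      show "(\<lambda>\<omega>. proc f H (\<lambda>j. Z j \<omega>) t) \<in> borel_measurable M"
        if "\<And>j. Z j \<in> borel_measurable M" for Z
        using that by (intro proc_meas[OF fm]) auto
    qed
  qed
qed

end
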